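(* Let $Z(t)=\sum_{k=1}^{N(t)}X_k$ be a compound Poisson process whose iid jumps $X_k$ have a light right tail, and let $B(1)$ be a standard normal random variable independent of $Z$. Then $$\lim_{u\to\infty}\frac{P\big(B(1)+\sup_{0\le t\le1}Z(t)>u\big)}{P(B(1)+Z(1)>u)}=1.$$
   Context: A random variable $X$ has a light right tail if either (i) $P(X>u)>0$ for all $u>0$ and $\lim_{u\to\infty}P(X_1>u)/P(X_1+X_2>u)=0$, where $X_1,X_2$ are independent copies of $X$; or (ii) there are constants $A>0,\alpha>0$ with $X\le A$ a.s. and $P(X>\alpha)>0$. A compound Poisson process has $N$ a Poisson process independent of the iid jumps. *)

theory Defs
  imports "HOL-Probability.Probability"
begin

text \<open>Case (i): P(X>u) > 0 for all u > 0 and P(X1>u)/P(X1+X2>u) tends to 0,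
  where the law of X1+X2 for independent copies is the convolution D * D.\<close>
definition light_right_tail :: "real measure \<Rightarrow> bool" where
  "light_right_tail D \<longleftrightarrow>
     ((\<forall>u>0. measure D {u<..} > 0) \<and>
      ((\<lambda>u. measure D {u<..} / measure (D \<star> D) {u<..}) \<longlongrightarrow> 0) at_top)
   \<or> (\<exists>A>0. \<exists>\<alpha>>0. (AE x in D. x \<le> A) \<and> measure D {\<alpha><..} > 0)"

text \<open>Poisson process of rate l built from iid Exp(l) inter-arrival times T 0, T 1, ...:
  N t = number of n >= 1 with T 0 + ... + T (n-1) <= t.\<close>
definition poisson_count :: "(nat \<Rightarrow> 'a \<Rightarrow> real) \<Rightarrow> real \<Rightarrow> 'a \<Rightarrow> nat" where
  "poisson_count T t \<omega> = card {n. 1 \<le> n \<and> (\<Sum>i<n. T i \<omega>) \<le> t}"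

text \<open>Compound Poisson process Z(t) = sum_{k=1}^{N(t)} X_k (jumps indexed from 0 here).\<close>
definition compound_poisson :: "(nat \<Rightarrow> 'a \<Rightarrow> real) \<Rightarrow> (nat \<Rightarrow> 'a \<Rightarrow> real) \<Rightarrow> real \<Rightarrow> 'a \<Rightarrow> real" where
  "compound_poisson T X t \<omega> = (\<Sum>k<poisson_count T t \<omega>. X k \<omega>)"

definition driving_family :: "(nat \<Rightarrow> 'a \<Rightarrow> real) \<Rightarrow> (nat \<Rightarrow> 'a \<Rightarrow> real) \<Rightarrow> ('a \<Rightarrow> real)
    \<Rightarrow> nat + nat + unit \<Rightarrow> 'a \<Rightarrow> real" where
  "driving_family T X B i = (case i of Inl n \<Rightarrow> T n | Inr (Inl n) \<Rightarrow> X n | Inr (Inr _) \<Rightarrow> B)"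

end

theory Submission
  imports Defs "HOL-Probability.Probability" "HOL-Real_Asymp.Real_Asymp"
begin


lemma ps_fm: "prob_space M \<Longrightarrow> finite_measure M" by (simp add: prob_space_def)

lemma conv_tail:
  fixes \<nu> E :: "real measure"
  assumes "prob_space \<nu>" "prob_space E" "sets \<nu> = sets borel" "sets E = sets borel"
  shows "emeasure (\<nu> \<star> E) {x<..} = (\<integral>\<^sup>+v. ennreal (measure E {x - v<..}) \<partial>\<nu>)"
proof -
  have sp: "space \<nu> = space borel" "space E = space borel"
    using sets_eq_imp_space_eq[OF assms(3)] sets_eq_imp_space_eq[OF assms(4)] by auto
  have "emeasure (\<nu> \<star> E) {x<..} = (\<integral>\<^sup>+v. emeasure E {a. a + v \<in> {x<..}} \<partial>\<nu>)"
    using assms sp by (intro convolution_emeasure) (simp_all add: sp prob_space_def)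
  also have "\<dots> = (\<integral>\<^sup>+v. ennreal (measure E {x - v<..}) \<partial>\<nu>)"
  proof (intro nn_integral_cong)
    fix v
    have "{a. a + v \<in> {x<..}} = {x - v<..}" by auto
    then show "emeasure E {a. a + v \<in> {x<..}} = ennreal (measure E {x - v<..})"
      using assms(2) by (simp add: finite_measure.emeasure_eq_measure[OF ps_fm])
  qed
  finally show ?thesis .
qed

lemma tail_meas_mono:
  fixes E :: "real measure"
  assumes "prob_space E" "sets E = sets borel"
  shows "(\<lambda>v. measure E {x - v<..}) \<in> borel_measurable borel"
proof (rule borel_measurable_mono, rule monoI)
  fix v w :: real assume "v \<le> w"
  then show "measure E {x - v<..} \<le> measure E {x - w<..}"
    using assms by (intro finite_measure.finite_measure_mono[OF ps_fm]) auto
qed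

lemma prob_space_conv:
  fixes A B :: "real measure"
  assumes "prob_space A" "prob_space B" "sets A = sets borel" "sets B = sets borel"
  shows "prob_space (A \<star> B)"
proof -
  interpret pair_prob_space A B using assms by (simp add: pair_prob_space_def pair_sigma_finite_def prob_space_imp_sigma_finite)
  have s: "sets (A \<Otimes>\<^sub>M B) = sets (borel \<Otimes>\<^sub>M borel)" using assms(3,4) by (intro sets_pair_measure_cong) auto
  have "(\<lambda>(x::real, y). x + y) \<in> borel_measurable (borel \<Otimes>\<^sub>M borel)" by measurable
  then have m: "(\<lambda>(x::real, y). x + y) \<in> borel_measurable (A \<Otimes>\<^sub>M B)"
    by (simp only: measurable_cong_sets[OF s refl])
  show ?thesis unfolding convolution_def
    by (intro prob_space.prob_space_distr m) (auto intro: P.prob_space_axioms)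
qed

locale conv_seq =
  fixes \<mu> :: "nat \<Rightarrow> real measure" and D :: "real measure"
  assumes prob_\<mu>: "prob_space (\<mu> k)" and sets_\<mu>: "sets (\<mu> k) = sets borel"
    and prob_D: "prob_space D" and sets_D: "sets D = sets borel"
    and \<mu>_Suc: "\<mu> (Suc k) = (\<mu> k \<star> D)"
begin

definition "a k x = measure (\<mu> k) {x<..}"

lemma a_nonneg: "0 \<le> a k x" by (simp add: a_def)
lemma a_le1: "a k x \<le> 1" unfolding a_def using prob_\<mu> by (rule prob_space.prob_le_1)

lemma a_antimono: "x \<le> y \<Longrightarrow> a k y \<le> a k x"
  unfolding a_def using prob_\<mu> sets_\<mu> by (intro finite_measure.finite_measure_mono[OF ps_fm]) auto

lemma emeasure_\<mu>: "emeasure (\<mu> k) A = ennreal (measure (\<mu> k) A)"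
  using prob_\<mu> by (rule finite_measure.emeasure_eq_measure[OF ps_fm])

lemma a_Suc_integral:
  "ennreal (a (Suc k) x) = (\<integral>\<^sup>+v. ennreal (measure D {x - v<..}) \<partial>\<mu> k)"
  unfolding a_def \<mu>_Suc using conv_tail[OF prob_\<mu> prob_D sets_\<mu> sets_D]
  by (metis emeasure_\<mu> \<mu>_Suc)

lemma shift1:
  "measure D {\<alpha><..} * a k (x - \<alpha>) \<le> a (Suc k) x"
proof -
  have "ennreal (measure D {\<alpha><..} * a k (x - \<alpha>)) =
     (\<integral>\<^sup>+v. ennreal (measure D {\<alpha><..}) * indicator {x - \<alpha><..} v \<partial>\<mu> k)"
  proof -
    have "(\<integral>\<^sup>+v. ennreal (measure D {\<alpha><..}) * indicator {x - \<alpha><..} v \<partial>\<mu> k)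
        = ennreal (measure D {\<alpha><..}) * emeasure (\<mu> k) {x - \<alpha><..}"
      using sets_\<mu> by (intro nn_integral_cmult_indicator) auto
    then show ?thesis by (simp add: a_def emeasure_\<mu> ennreal_mult)
  qed
  also have "\<dots> \<le> (\<integral>\<^sup>+v. ennreal (measure D {x - v<..}) \<partial>\<mu> k)"
  proof (intro nn_integral_mono)
    fix v assume "v \<in> space (\<mu> k)"
    show "ennreal (measure D {\<alpha><..}) * indicator {x - \<alpha><..} v \<le> ennreal (measure D {x - v<..})"
    proof (cases "x - \<alpha> < v")
      case True
      then have "measure D {\<alpha><..} \<le> measure D {x - v<..}"
        using prob_D sets_D by (intro finite_measure.finite_measure_mono[OF ps_fm]) auto
      then show ?thesis using True by (simp add: indicator_def)
    qed (simp add: indicator_def)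
  qed
  also have "\<dots> = ennreal (a (Suc k) x)" by (rule a_Suc_integral[symmetric])
  finally show ?thesis by (simp add: a_nonneg)
qed

lemma shiftm:
  "measure D {\<alpha><..} ^ m * a k (x - real m * \<alpha>) \<le> a (k + m) x"
proof (induction m arbitrary: x)
  case 0 then show ?case by simp
next
  case (Suc m)
  have c0: "0 \<le> measure D {\<alpha><..}" by simp
  have "measure D {\<alpha><..} ^ Suc m * a k (x - real (Suc m) * \<alpha>)
      = measure D {\<alpha><..} * (measure D {\<alpha><..} ^ m * a k ((x - \<alpha>) - real m * \<alpha>))"
    by (simp add: algebra_simps)
  also have "\<dots> \<le> measure D {\<alpha><..} * a (k + m) (x - \<alpha>)"
    using Suc.IH[of "x - \<alpha>"] c0 by (intro mult_left_mono) auto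
  also have "\<dots> \<le> a (Suc (k + m)) x" by (rule shift1)
  finally show ?case by simp
qed

lemma prob_DD: "prob_space (D \<star> D)" using prob_D sets_D by (intro prob_space_conv)

lemma \<mu>_SucSuc: "\<mu> (Suc (Suc k)) = (\<mu> k \<star> (D \<star> D))"
  unfolding \<mu>_Suc using prob_\<mu> prob_D sets_\<mu> sets_D
  by (intro convolution_associative[symmetric]) (auto intro: ps_fm)

lemma step:
  assumes eta: "0 \<le> \<eta>" and tail: "\<And>y. s0 \<le> y \<Longrightarrow> measure D {y<..} \<le> \<eta> * measure (D \<star> D) {y<..}"
  shows "a (Suc k) x \<le> \<eta> * a (Suc (Suc k)) x + a k (x - s0)"
proof -
  have m0: "(\<lambda>v. measure (D \<star> D) {x - v<..}) \<in> borel_measurable borel"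
    by (rule tail_meas_mono[OF prob_DD]) simp
  have m1: "(\<lambda>v. ennreal \<eta> * ennreal (measure (D \<star> D) {x - v<..})) \<in> borel_measurable (\<mu> k)"
    using m0 by (simp only: measurable_cong_sets[OF sets_\<mu> refl]) (intro borel_measurable_times_ennreal measurable_const measurable_compose[OF _ measurable_ennreal]; simp)
  have m2: "indicator {x - s0<..} \<in> borel_measurable (\<mu> k)"
    by (simp only: measurable_cong_sets[OF sets_\<mu> refl]) (intro borel_measurable_indicator, simp)
  have "ennreal (a (Suc k) x) = (\<integral>\<^sup>+v. ennreal (measure D {x - v<..}) \<partial>\<mu> k)"
    by (rule a_Suc_integral)
  also have "\<dots> \<le> (\<integral>\<^sup>+v. ennreal \<eta> * ennreal (measure (D \<star> D) {x - v<..}) + indicator {x - s0<..} v \<partial>\<mu> k)"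
  proof (intro nn_integral_mono)
    fix v
    show "ennreal (measure D {x - v<..}) \<le> ennreal \<eta> * ennreal (measure (D \<star> D) {x - v<..}) + indicator {x - s0<..} v"
    proof (cases "x - s0 < v")
      case True
      have "measure D {x - v<..} \<le> 1" using prob_D by (rule prob_space.prob_le_1)
      then have "ennreal (measure D {x - v<..}) \<le> 1" by (simp add: ennreal_le_1)
      also have "(1::ennreal) \<le> ennreal \<eta> * ennreal (measure (D \<star> D) {x - v<..}) + 1" by simp
      finally show ?thesis using True by (simp add: indicator_def)
    next
      case False
      then have "measure D {x - v<..} \<le> \<eta> * measure (D \<star> D) {x - v<..}" by (intro tail) auto
      then show ?thesis using False eta by (simp add: indicator_def ennreal_mult[symmetric])
    qed
  qed
  also have "\<dots> = ennreal \<eta> * (\<integral>\<^sup>+v. ennreal (measure (D \<star> D) {x - v<..}) \<partial>\<mu> k) + emeasure (\<mu> k) {x - s0<..}"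
  proof -
    have "(\<integral>\<^sup>+v. ennreal \<eta> * ennreal (measure (D \<star> D) {x - v<..}) + indicator {x - s0<..} v \<partial>\<mu> k)
       = (\<integral>\<^sup>+v. ennreal \<eta> * ennreal (measure (D \<star> D) {x - v<..}) \<partial>\<mu> k) + (\<integral>\<^sup>+v. indicator {x - s0<..} v \<partial>\<mu> k)"
      by (rule nn_integral_add[OF m1 m2])
    also have "(\<integral>\<^sup>+v. ennreal \<eta> * ennreal (measure (D \<star> D) {x - v<..}) \<partial>\<mu> k) = ennreal \<eta> * (\<integral>\<^sup>+v. ennreal (measure (D \<star> D) {x - v<..}) \<partial>\<mu> k)"
      using m0 by (intro nn_integral_cmult) (simp only: measurable_cong_sets[OF sets_\<mu> refl], intro measurable_compose[OF _ measurable_ennreal])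
    also have "(\<integral>\<^sup>+v. indicator {x - s0<..} v \<partial>\<mu> k) = emeasure (\<mu> k) {x - s0<..}"
      using sets_\<mu> by (intro nn_integral_indicator) simp
    finally show ?thesis .
  qed
  also have "(\<integral>\<^sup>+v. ennreal (measure (D \<star> D) {x - v<..}) \<partial>\<mu> k) = ennreal (a (Suc (Suc k)) x)"
    unfolding a_def \<mu>_SucSuc using conv_tail[OF prob_\<mu> prob_DD sets_\<mu>, where x=x] 
    by (simp add: finite_measure.emeasure_eq_measure[OF ps_fm[OF prob_space_conv[OF prob_\<mu> prob_DD sets_\<mu>]]])
  also have "emeasure (\<mu> k) {x - s0<..} = ennreal (a k (x - s0))" by (simp add: emeasure_\<mu> a_def)
  also have "ennreal \<eta> * ennreal (a (Suc (Suc k)) x) + ennreal (a k (x - s0)) = ennreal (\<eta> * a (Suc (Suc k)) x + a k (x - s0))"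
    using eta a_nonneg by (simp add: ennreal_mult ennreal_plus)
  finally show ?thesis using eta a_nonneg by (subst (asm) ennreal_le_iff) (auto intro: add_nonneg_nonneg)
qed

end


locale conv_seq_L = conv_seq +
  fixes p :: "nat \<Rightarrow> real" and Den :: "real \<Rightarrow> real" and \<alpha> :: real
  assumes p_pos: "\<And>k. p k > 0" and Den_ge: "\<And>k u. p k * a k u \<le> Den u"
    and \<alpha>_pos: "\<alpha> > 0" and c_pos: "measure D {\<alpha><..} > 0"
    and tail: "\<And>\<eta>. \<eta> > 0 \<Longrightarrow> \<exists>s0. \<forall>y\<ge>s0. measure D {y<..} \<le> \<eta> * measure (D \<star> D) {y<..}"
    and gauss: "\<And>s. ((\<lambda>u. a 0 (u - s) / a 0 (u - s - 1)) \<longlongrightarrow> 0) at_top"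
    and a0_pos: "\<And>x. a 0 x > 0"
begin

lemma exists_m: "\<exists>m::nat. t \<le> real m * \<alpha>"
proof -
  obtain m :: nat where "t / \<alpha> \<le> real m" using real_arch_simple by blast
  then have "t \<le> real m * \<alpha>" using \<alpha>_pos by (simp add: divide_le_eq)
  then show ?thesis by blast
qed

lemma shift_Den:
  assumes "t \<le> real m * \<alpha>"
  shows "p (k + m) * measure D {\<alpha><..} ^ m * a k (u - t) \<le> Den u"
proof -
  have 1: "a k (u - t) \<le> a k (u - real m * \<alpha>)" using assms by (intro a_antimono) auto
  have "p (k + m) * measure D {\<alpha><..} ^ m * a k (u - t) \<le> p (k+m) * (measure D {\<alpha><..} ^ m * a k (u - real m * \<alpha>))"
    using 1 p_pos[of "k+m"] by (simp add: mult.assoc mult_left_mono)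
  also have "\<dots> \<le> p (k+m) * a (k+m) u"
    using p_pos[of "k+m"] shiftm[where m=m and k=k and x=u and \<alpha>=\<alpha>] by (intro mult_left_mono) auto
  also have "\<dots> \<le> Den u" by (rule Den_ge)
  finally show ?thesis .
qed

lemma c_pow_pos: "measure D {\<alpha><..} ^ m > 0" using c_pos by simp

lemma L: "\<epsilon> > 0 \<Longrightarrow> eventually (\<lambda>u. a k (u - s) \<le> \<epsilon> * Den u) at_top"
proof (induction k arbitrary: s \<epsilon>)
  case 0
  obtain m where m: "s + 1 \<le> real m * \<alpha>" using exists_m by blast
  define C where "C = p (0 + m) * measure D {\<alpha><..} ^ m"
  have Cpos: "C > 0" unfolding C_def using p_pos c_pow_pos by simp
  have "eventually (\<lambda>u. a 0 (u - s) / a 0 (u - s - 1) < \<epsilon> * C) at_top"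
    using gauss[of s] 0 Cpos by (intro order_tendstoD(2)) auto
  then show ?case
  proof eventually_elim
    case (elim u)
    have "a 0 (u - s) < \<epsilon> * C * a 0 (u - s - 1)" using elim a0_pos[of "u - s - 1"] by (simp add: divide_less_eq)
    also have "\<dots> = \<epsilon> * (C * a 0 (u - (s + 1)))" by (simp add: algebra_simps)
    also have "\<dots> \<le> \<epsilon> * Den u" using shift_Den[OF m, of 0 u] 0 unfolding C_def by (intro mult_left_mono) auto
    finally show ?case by simp
  qed
next
  case (Suc k)
  obtain m where m: "s \<le> real m * \<alpha>" using exists_m by blast
  define C where "C = p (Suc (Suc k) + m) * measure D {\<alpha><..} ^ m"
  have Cpos: "C > 0" unfolding C_def using p_pos c_pow_pos by simp
  define \<eta> where "\<eta> = \<epsilon> * C / 2"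
  have eta: "\<eta> > 0" unfolding \<eta>_def using Suc.prems Cpos by simp
  obtain s0 where s0: "\<And>y. s0 \<le> y \<Longrightarrow> measure D {y<..} \<le> \<eta> * measure (D \<star> D) {y<..}"
    using tail[OF eta] by blast
  have "eventually (\<lambda>u. a k (u - (s + s0)) \<le> (\<epsilon>/2) * Den u) at_top"
    using Suc.prems by (intro Suc.IH) auto
  then show ?case
  proof eventually_elim
    case (elim u)
    have "a (Suc k) (u - s) \<le> \<eta> * a (Suc (Suc k)) (u - s) + a k (u - s - s0)"
      using eta s0 by (intro step) auto
    also have "\<eta> * a (Suc (Suc k)) (u - s) = (\<epsilon>/2) * (C * a (Suc (Suc k)) (u - s))"
      unfolding \<eta>_def by (simp add: algebra_simps)
    also have "\<dots> \<le> (\<epsilon>/2) * Den u"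
      using shift_Den[OF m, of "Suc (Suc k)" u] Suc.prems unfolding C_def by (intro mult_left_mono) auto
    also have "a k (u - s - s0) = a k (u - (s + s0))" by (simp add: algebra_simps)
    finally show ?case using elim by simp
  qed
qed

end


abbreviation "N01 \<equiv> density lborel std_normal_density"

lemma emeasure_N01: "emeasure N01 A = ennreal (measure N01 A)"
  using prob_space_normal_density[of 1 0] 
  by (intro finite_measure.emeasure_eq_measure) (simp add: std_normal_density_def prob_space_def)

lemma prob_N01: "prob_space N01"
  using prob_space_normal_density[of 1 0] by (simp add: std_normal_density_def)

lemma phi_eq: "std_normal_density x = exp (- x\<^sup>2 / 2) / sqrt (2 * pi)"
  by (simp add: std_normal_density_def)

lemma N01_upper:
  assumes y: "y > 0"
  shows "measure N01 {y<..} \<le> std_normal_density y / y"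
proof -
  have deriv: "DERIV (\<lambda>x. - std_normal_density x) x :> x * std_normal_density x" for x
    unfolding phi_eq
    by (auto intro!: derivative_eq_intros simp: field_simps power2_eq_square)
  have lim: "((\<lambda>x. - std_normal_density x) \<longlongrightarrow> 0) at_top"
    unfolding phi_eq by real_asymp
  have "emeasure N01 {y<..} = (\<integral>\<^sup>+x. ennreal (std_normal_density x) * indicator {y<..} x \<partial>lborel)"
    by (subst emeasure_density) (auto simp: mult.commute)
  also have "\<dots> \<le> (\<integral>\<^sup>+x. ennreal (1/y) * (ennreal (x * std_normal_density x) * indicator {y..} x) \<partial>lborel)"
  proof (intro nn_integral_mono)
    fix x
    show "ennreal (std_normal_density x) * indicator {y<..} x \<le> ennreal (1/y) * (ennreal (x * std_normal_density x) * indicator {y..} x)"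
    proof (cases "y < x")
      case True
      have "std_normal_density x \<le> (1/y) * (x * std_normal_density x)"
        using True y by (simp add: field_simps mult_right_mono)
      then show ?thesis using True y by (simp add: indicator_def ennreal_mult[symmetric])
    qed (simp add: indicator_def)
  qed
  also have "\<dots> = ennreal (1/y) * (\<integral>\<^sup>+x. ennreal (x * std_normal_density x) * indicator {y..} x \<partial>lborel)"
    by (intro nn_integral_cmult) measurable
  also have "(\<integral>\<^sup>+x. ennreal (x * std_normal_density x) * indicator {y..} x \<partial>lborel) = 0 - (- std_normal_density y)"
    using y by (intro nn_integral_FTC_atLeast[OF _ deriv _ lim]) auto
  finally have "emeasure N01 {y<..} \<le> ennreal (std_normal_density y / y)"
    using y by (simp add: ennreal_mult[symmetric])
  then show ?thesis
    using y by (simp add: emeasure_N01 ennreal_le_iff)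
qed

lemma N01_lower:
  assumes y: "y \<ge> 0"
  shows "std_normal_density (y + 1) \<le> measure N01 {y<..}"
proof -
  have "ennreal (std_normal_density (y + 1)) = (\<integral>\<^sup>+x. ennreal (std_normal_density (y + 1)) * indicator {y<..y+1} x \<partial>lborel)"
    by (simp add: nn_integral_cmult_indicator)
  also have "\<dots> \<le> (\<integral>\<^sup>+x. ennreal (std_normal_density x) * indicator {y<..} x \<partial>lborel)"
  proof (intro nn_integral_mono)
    fix x
    show "ennreal (std_normal_density (y + 1)) * indicator {y<..y+1} x \<le> ennreal (std_normal_density x) * indicator {y<..} x"
    proof (cases "y < x \<and> x \<le> y + 1")
      case True
      then have "x\<^sup>2 \<le> (y+1)\<^sup>2" using y by (intro power_mono) auto
      then have "std_normal_density (y + 1) \<le> std_normal_density x"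
        unfolding phi_eq by (intro divide_right_mono) auto
      then show ?thesis using True by (simp add: indicator_def)
    qed (auto simp: indicator_def)
  qed
  also have "\<dots> = emeasure N01 {y<..}"
    by (subst emeasure_density) (auto simp: mult.commute)
  finally show ?thesis by (simp add: emeasure_N01 ennreal_le_iff)
qed

lemma N01_pos: "measure N01 {x<..} > 0"
proof -
  have "0 < std_normal_density (max x 0 + 1)" by (simp add: std_normal_density_def)
  also have "\<dots> \<le> measure N01 {max x 0<..}" by (intro N01_lower) auto
  also have "\<dots> \<le> measure N01 {x<..}"
    using prob_N01 by (intro finite_measure.finite_measure_mono) (auto simp: prob_space_def)
  finally show ?thesis .
qed

lemma N01_ratio: "((\<lambda>u. measure N01 {u - s<..} / measure N01 {u - s - 1<..}) \<longlongrightarrow> 0) at_top"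
proof (rule tendsto_sandwich[where f="\<lambda>_. 0" and h="\<lambda>u. 1 / (u - s)"])
  show "eventually (\<lambda>u. 0 \<le> measure N01 {u - s<..} / measure N01 {u - s - 1<..}) at_top" by simp
  show "eventually (\<lambda>u. measure N01 {u - s<..} / measure N01 {u - s - 1<..} \<le> 1 / (u - s)) at_top"
    using eventually_ge_at_top[of "s + 1"]
  proof eventually_elim
    case (elim u)
    have a: "measure N01 {u - s<..} \<le> std_normal_density (u - s) / (u - s)" using elim by (intro N01_upper) auto
    have b: "std_normal_density (u - s) \<le> measure N01 {u - s - 1<..}" using elim N01_lower[of "u - s - 1"] by auto
    have pos: "std_normal_density (u - s) > 0" by (simp add: std_normal_density_def)
    have "measure N01 {u - s<..} / measure N01 {u - s - 1<..} \<le> (std_normal_density (u - s) / (u - s)) / std_normal_density (u - s)"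
      using a b pos elim by (intro frac_le) auto
    also have "\<dots> = 1 / (u - s)" using pos by simp
    finally show ?case .
  qed
  show "((\<lambda>u. 1 / (u - s)) \<longlongrightarrow> 0) at_top" by real_asymp
qed simp


lemma final_comb:
  fixes Num Den :: "real \<Rightarrow> real" and a :: "nat \<Rightarrow> real \<Rightarrow> real"
  assumes Den_pos: "\<And>u. Den u > 0"
    and low: "\<And>u. Den u \<le> Num u"
    and small: "\<And>k \<epsilon>. \<epsilon> > 0 \<Longrightarrow> eventually (\<lambda>u. a k u \<le> \<epsilon> * Den u) at_top"
    and up: "\<And>\<delta>. \<delta> > 0 \<Longrightarrow> \<exists>K. \<forall>u. Num u \<le> (\<Sum>k<K. a k u) + (1 + \<delta>) * Den u"
  shows "((\<lambda>u. Num u / Den u) \<longlongrightarrow> 1) at_top"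
proof (rule order_tendstoI)
  fix y :: real assume "y < 1"
  then show "eventually (\<lambda>u. y < Num u / Den u) at_top"
    using low Den_pos by (intro always_eventually allI) (auto simp: le_divide_eq intro: less_le_trans)
next
  fix y :: real assume y: "1 < y"
  define \<delta> where "\<delta> = (y - 1) / 3"
  have d: "\<delta> > 0" using y by (simp add: \<delta>_def)
  obtain K where K: "\<And>u. Num u \<le> (\<Sum>k<K. a k u) + (1 + \<delta>) * Den u" using up[OF d] by blast
  have "eventually (\<lambda>u. \<forall>k\<in>{..<K}. a k u \<le> (\<delta> / (real K + 1)) * Den u) at_top"
    using d by (intro eventually_ball_finite ballI small) auto
  then show "eventually (\<lambda>u. Num u / Den u < y) at_top"
  proof eventually_elim
    case (elim u)
    have "(\<Sum>k<K. a k u) \<le> (\<Sum>k<K. (\<delta> / (real K + 1)) * Den u)" using elim by (intro sum_mono) auto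
    also have "\<dots> = real K / (real K + 1) * \<delta> * Den u" by simp
    also have "\<dots> \<le> \<delta> * Den u" using d Den_pos[of u] by (intro mult_right_mono) (auto simp: field_simps)
    finally have "Num u \<le> (1 + 2 * \<delta>) * Den u" using K[of u] by (simp add: algebra_simps)
    also have "\<dots> < y * Den u" using Den_pos[of u] y by (intro mult_strict_right_mono) (auto simp: \<delta>_def field_simps)
    finally show ?case using Den_pos[of u] by (simp add: divide_less_eq)
  qed
qed


lemma card_eq_iff:
  "card {n. Q n} = c \<longleftrightarrow>
    (\<exists>b::nat. (\<forall>n. b \<le> n \<longrightarrow> \<not> Q n) \<and> (\<Sum>n<b. if Q n then 1 else 0::real) = real c)
    \<or> (c = 0 \<and> (\<forall>b::nat. \<exists>n. b \<le> n \<and> Q n))" (is "_ \<longleftrightarrow> ?R")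
proof (cases "finite {n. Q n}")
  case True
  then obtain b where b: "\<forall>n. b \<le> n \<longrightarrow> \<not> Q n"
    by (metis (mono_tags, lifting) finite_nat_set_iff_bounded_le mem_Collect_eq not_less_eq_eq)
  have cb: "card {n. Q n} = card {n\<in>{..<b}. Q n}" using b by (metis (mono_tags, lifting) Collect_cong lessThan_iff linorder_not_le mem_Collect_eq)
  have sb: "\<And>b'. (\<forall>n. b' \<le> n \<longrightarrow> \<not> Q n) \<Longrightarrow> (\<Sum>n<b'. if Q n then 1 else 0::real) = real (card {n. Q n})"
  proof -
    fix b' assume b': "\<forall>n. b' \<le> n \<longrightarrow> \<not> Q n"
    have "(\<Sum>n<b'. if Q n then 1 else 0::real) = real (card {n\<in>{..<b'}. Q n})"
      by (simp add: sum.If_cases Int_def conj_commute)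
    also have "{n\<in>{..<b'}. Q n} = {n. Q n}" using b' by (auto simp: not_le[symmetric])
    finally show "(\<Sum>n<b'. if Q n then 1 else 0::real) = real (card {n. Q n})" .
  qed
  have nb: "\<not> (\<forall>b::nat. \<exists>n. b \<le> n \<and> Q n)" using b by auto
  show ?thesis
  proof
    assume "card {n. Q n} = c" then show ?R using b sb[OF b] by blast
  next
    assume "(\<exists>b::nat. (\<forall>n. b \<le> n \<longrightarrow> \<not> Q n) \<and> (\<Sum>n<b. if Q n then 1 else 0::real) = real c)
    \<or> (c = 0 \<and> (\<forall>b::nat. \<exists>n. b \<le> n \<and> Q n))"
    then show "card {n. Q n} = c" using sb nb by (metis of_nat_eq_iff)
  qed
next
  case False
  then have unb: "\<forall>b::nat. \<exists>n. b \<le> n \<and> Q n"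
    by (metis (mono_tags, lifting) finite_nat_set_iff_bounded_le mem_Collect_eq nle_le)
  have "\<not> (\<exists>b::nat. (\<forall>n. b \<le> n \<longrightarrow> \<not> Q n))" using unb by auto
  then show ?thesis using False unb by auto
qed

lemma measurable_card_pred:
  fixes Q :: "nat \<Rightarrow> 'a \<Rightarrow> bool"
  assumes Q: "\<And>n. Measurable.pred M (Q n)"
  shows "(\<lambda>x. card {n. Q n x}) \<in> measurable M (count_space UNIV)"
proof (subst measurable_count_space_eq2_countable, safe)
  fix c :: nat
  have "{x \<in> space M. (\<exists>b::nat. (\<forall>n. b \<le> n \<longrightarrow> \<not> Q n x) \<and> (\<Sum>n<b. if Q n x then 1 else 0::real) = real c)
    \<or> (c = 0 \<and> (\<forall>b::nat. \<exists>n. b \<le> n \<and> Q n x))} \<in> sets M"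
    using Q by measurable
  also have "{x \<in> space M. (\<exists>b::nat. (\<forall>n. b \<le> n \<longrightarrow> \<not> Q n x) \<and> (\<Sum>n<b. if Q n x then 1 else 0::real) = real c)
    \<or> (c = 0 \<and> (\<forall>b::nat. \<exists>n. b \<le> n \<and> Q n x))} = (\<lambda>x. card {n. Q n x}) -` {c} \<inter> space M"
    by (auto simp: card_eq_iff[symmetric])
  finally show "(\<lambda>x. card {n. Q n x}) -` {c} \<inter> space M \<in> sets M" .
qed auto


lemma Sup_real_unbounded:
  fixes A :: "real set"
  assumes "\<not> bdd_above A"
  shows "Sup A = Sup (UNIV :: real set)"
proof -
  have "(\<lambda>z. \<forall>x\<in>A. x \<le> z) = (\<lambda>z. False)" by (intro ext) (use assms in \<open>auto simp: bdd_above_def\<close>)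
  moreover have "(\<lambda>z. \<forall>x\<in>(UNIV::real set). x \<le> z) = (\<lambda>z. False)"
    by (auto intro!: ext) (metis gt_ex not_le)
  ultimately show ?thesis unfolding Sup_real_def by simp
qed

lemma measurable_SUP_real:
  fixes F :: "nat \<Rightarrow> 'a \<Rightarrow> real"
  assumes F[measurable]: "\<And>j. F j \<in> borel_measurable M"
  shows "(\<lambda>x. SUP j. F j x) \<in> borel_measurable M"
proof -
  define bd where "bd x = (\<exists>n::nat. \<forall>j. F j x \<le> real n)" for x
  have bd_iff: "bd x \<longleftrightarrow> bdd_above (range (\<lambda>j. F j x))" for x
    unfolding bd_def bdd_above_def
    by (auto, meson order_trans real_arch_simple)
  have [measurable]: "Measurable.pred M bd" unfolding bd_def by measurable
  define G where "G j x = (if bd x then F j x else 0)" for j x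
  have [measurable]: "G j \<in> borel_measurable M" for j unfolding G_def by measurable
  have m: "(\<lambda>x. SUP j. G j x) \<in> borel_measurable M"
  proof (rule borel_measurable_cSUP)
    fix x
    show "bdd_above (range (\<lambda>j. G j x))"
      by (cases "bd x") (auto simp: G_def bd_iff)
  qed auto
  have eq: "(SUP j. F j x) = (if bd x then (SUP j. G j x) else Sup (UNIV::real set))" for x
    using Sup_real_unbounded[of "range (\<lambda>j. F j x)"] by (auto simp: G_def bd_iff)
  show ?thesis unfolding eq using m by measurable
qed

lemma SUP_reduce:
  fixes P :: "nat \<Rightarrow> real" and G :: "nat \<Rightarrow> real"
  defines "f \<equiv> \<lambda>t. G (card {n. 1 \<le> n \<and> P n \<le> t})"
  defines "\<tau> \<equiv> \<lambda>j. (case j of 0 \<Rightarrow> 0 | Suc 0 \<Rightarrow> 1 | Suc (Suc m) \<Rightarrow> if 0 \<le> P m \<and> P m \<le> 1 then P m else (0::real))"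
  shows "f ` {0..1} = range (\<lambda>j. f (\<tau> j))"
proof
  show "range (\<lambda>j. f (\<tau> j)) \<subseteq> f ` {0..1}"
  proof safe
    fix j
    have "\<tau> j \<in> {0..1}" unfolding \<tau>_def by (auto split: nat.split)
    then show "f (\<tau> j) \<in> f ` {0..1}" by blast
  qed
next
  show "f ` {0..1} \<subseteq> range (\<lambda>j. f (\<tau> j))"
  proof safe
    fix t :: real assume t: "t \<in> {0..1}"
    define St where "St s = {n. 1 \<le> n \<and> P n \<le> s}" for s
    have f_St: "f s = G (card (St s))" for s unfolding f_def St_def ..
    have mono: "s \<le> s' \<Longrightarrow> St s \<subseteq> St s'" for s s' unfolding St_def by auto
    have "\<exists>s\<in>{0, 1} \<union> {P m |m. 0 \<le> P m \<and> P m \<le> 1}. f t = f s"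
    proof (cases "finite (St t)")
      case False
      then have "\<not> finite (St 1)" using mono[of t 1] t finite_subset by auto
      then have "f t = f 1" using False by (simp add: f_St)
      then show ?thesis by auto
    next
      case fin: True
      show ?thesis
      proof (cases "St t = {}")
        case True
        then have "St 0 = {}" using mono[of 0 t] t by auto
        then have "f t = f 0" using True by (simp add: f_St)
        then show ?thesis by auto
      next
        case False
        have "Max (P ` St t) \<in> P ` St t" using fin False by (intro Max_in) auto
        then obtain m where m1: "m \<in> St t" "P m = Max (P ` St t)" by auto
        have m: "m \<in> St t" "\<And>n. n \<in> St t \<Longrightarrow> P n \<le> P m"
          using m1 fin by (auto intro: Max_ge)
        show ?thesis
        proof (cases "0 \<le> P m")
          case True
          have "St (P m) = St t" using m unfolding St_def by auto
          moreover have "P m \<le> 1" using m t unfolding St_def by auto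
          ultimately show ?thesis using True by (auto simp: f_St)
        next
          case False
          have "St 0 = St t" using m False t unfolding St_def by (auto, force)
          then show ?thesis by (auto simp: f_St)
        qed
      qed
    qed
    then obtain s where s: "s \<in> {0, 1} \<union> {P m |m. 0 \<le> P m \<and> P m \<le> 1}" "f t = f s" by blast
    have "\<exists>j. s = \<tau> j"
    proof -
      { assume "s = 0" then have "s = \<tau> 0" by (simp add: \<tau>_def) }
      moreover { assume "s = 1" then have "s = \<tau> 1" by (simp add: \<tau>_def) }
      moreover { fix m assume "s = P m" "0 \<le> P m" "P m \<le> 1"
        then have "s = \<tau> (Suc (Suc m))" by (simp add: \<tau>_def) }
      ultimately show ?thesis using s(1) by blast
    qed
    then show "f t \<in> range (\<lambda>j. f (\<tau> j))" using s(2) by auto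
  qed
qed


locale cpp = prob_space M for M :: "'a measure" +
  fixes l :: real and T X :: "nat \<Rightarrow> 'a \<Rightarrow> real" and B :: "'a \<Rightarrow> real"
  assumes l_pos: "l > 0"
    and T_exp: "\<And>n. distributed M lborel (T n) (exponential_density l)"
    and X_meas[measurable]: "\<And>k. X k \<in> borel_measurable M"
    and X_distr: "\<And>k. distr M borel (X k) = distr M borel (X 0)"
    and B_norm: "distributed M lborel B std_normal_density"
    and indep: "indep_vars (\<lambda>_. borel) (driving_family T X B) UNIV"
begin

abbreviation "F \<equiv> driving_family T X B"

definition "Ps n \<omega> = (\<Sum>i<n. T i \<omega>)"
definition "Nc \<omega> = poisson_count T 1 \<omega>"
definition "S k \<omega> = (\<Sum>i<k. X i \<omega>)"
definition "V k \<omega> = B \<omega> + S k \<omega>"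

lemma T_meas[measurable]: "T n \<in> borel_measurable M"
  using distributed_measurable[OF T_exp[of n]] by (simp only: measurable_lborel1)

lemma B_meas[measurable]: "B \<in> borel_measurable M"
  using distributed_measurable[OF B_norm] by (simp only: measurable_lborel1)

lemma Ps_meas[measurable]: "Ps n \<in> borel_measurable M" unfolding Ps_def by measurable
lemma S_meas[measurable]: "S k \<in> borel_measurable M" unfolding S_def by measurable
lemma V_meas[measurable]: "V k \<in> borel_measurable M" unfolding V_def by measurable

lemma pc_eq: "poisson_count T t \<omega> = card {n. 1 \<le> n \<and> Ps n \<omega> \<le> t}"
  by (simp add: poisson_count_def Ps_def)

lemma pc_meas:
  assumes [measurable]: "g \<in> borel_measurable M"
  shows "(\<lambda>\<omega>. poisson_count T (g \<omega>) \<omega>) \<in> measurable M (count_space UNIV)"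
  unfolding pc_eq by (rule measurable_card_pred) measurable

lemma Nc_meas[measurable]: "Nc \<in> measurable M (count_space UNIV)"
  unfolding Nc_def using pc_meas[of "\<lambda>_. 1"] by simp

lemma cp_eq: "compound_poisson T X t \<omega> = S (poisson_count T t \<omega>) \<omega>"
  by (simp add: compound_poisson_def S_def)

lemma cp_meas:
  assumes [measurable]: "g \<in> borel_measurable M"
  shows "(\<lambda>\<omega>. compound_poisson T X (g \<omega>) \<omega>) \<in> borel_measurable M"
  unfolding cp_eq
  by (rule measurable_compose_countable'[where I=UNIV, OF _ pc_meas[OF assms]]) auto

definition "\<tau> j \<omega> = (case j of 0 \<Rightarrow> 0 | Suc 0 \<Rightarrow> 1 | Suc (Suc m) \<Rightarrow> if 0 \<le> Ps m \<omega> \<and> Ps m \<omega> \<le> 1 then Ps m \<omega> else (0::real))"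

lemma tau_meas[measurable]: "\<tau> j \<in> borel_measurable M"
proof (cases j)
  case 0
  have "\<tau> 0 = (\<lambda>_. 0)" by (simp add: \<tau>_def fun_eq_iff)
  then show ?thesis using 0 by simp
next
  case (Suc j')
  show ?thesis
  proof (cases j')
    case 0
    have "\<tau> 1 = (\<lambda>_. 1)" by (simp add: \<tau>_def fun_eq_iff)
    then show ?thesis using 0 Suc by simp
  next
    case (Suc m)
    have "\<tau> j = (\<lambda>\<omega>. if 0 \<le> Ps m \<omega> \<and> Ps m \<omega> \<le> 1 then Ps m \<omega> else 0)"
      using Suc \<open>j = Suc j'\<close> by (simp add: \<tau>_def fun_eq_iff)
    then show ?thesis by simp
  qed
qed

lemma SUP_eq: "(SUP t\<in>{0..1}. compound_poisson T X t \<omega>) = (SUP j. compound_poisson T X (\<tau> j \<omega>) \<omega>)"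
proof -
  have "(\<lambda>t. compound_poisson T X t \<omega>) ` {0..1} = range (\<lambda>j. compound_poisson T X (\<tau> j \<omega>) \<omega>)"
    unfolding cp_eq pc_eq \<tau>_def by (rule SUP_reduce)
  then show ?thesis by (simp add: image_image)
qed

lemma SUP_meas[measurable]: "(\<lambda>\<omega>. SUP t\<in>{0..1}. compound_poisson T X t \<omega>) \<in> borel_measurable M"
  unfolding SUP_eq by (intro measurable_SUP_real cp_meas tau_meas)

end


context cpp begin

lemma comp_meas_Inl: "(\<lambda>h. h (Inl i)) \<in> borel_measurable (PiM (range Inl) (\<lambda>_. borel))"
  by (rule measurable_component_singleton) auto

lemma comp_meas_Inr: "(\<lambda>h. h (Inr j)) \<in> borel_measurable (PiM (range Inr) (\<lambda>_. borel))"
  by (rule measurable_component_singleton) auto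

lemma indep_NV: "indep_var borel (\<lambda>\<omega>. real (Nc \<omega>)) borel (V k)"
proof -
  note comp_meas_Inl[measurable] comp_meas_Inr[measurable]
  have iv: "indep_var (PiM (range Inl) (\<lambda>_. borel)) (\<lambda>\<omega>. restrict (\<lambda>i. F i \<omega>) (range Inl))
      (PiM (range Inr) (\<lambda>_. borel)) (\<lambda>\<omega>. restrict (\<lambda>i. F i \<omega>) (range Inr))"
    by (rule indep_var_restrict[OF indep]) auto
  define g1 where "g1 h = real (card {n. 1 \<le> n \<and> (\<Sum>i<n. h (Inl i)) \<le> (1::real)})" for h :: "nat + nat + unit \<Rightarrow> real"
  define g2 where "g2 h = h (Inr (Inr ())) + (\<Sum>i<k. h (Inr (Inl i)))" for h :: "nat + nat + unit \<Rightarrow> real"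
  have g1m: "g1 \<in> borel_measurable (PiM (range Inl) (\<lambda>_. borel))"
  proof -
    have c: "(\<lambda>h::nat + nat + unit \<Rightarrow> real. card {n. 1 \<le> n \<and> (\<Sum>i<n. h (Inl i)) \<le> (1::real)}) \<in> measurable (PiM (range Inl) (\<lambda>_. borel)) (count_space UNIV)"
      by (rule measurable_card_pred) measurable
    show ?thesis unfolding g1_def by (rule measurable_compose[OF c]) simp
  qed
  have g2m: "g2 \<in> borel_measurable (PiM (range Inr) (\<lambda>_. borel))"
    unfolding g2_def by measurable
  have "indep_var borel (g1 \<circ> (\<lambda>\<omega>. restrict (\<lambda>i. F i \<omega>) (range Inl))) borel (g2 \<circ> (\<lambda>\<omega>. restrict (\<lambda>i. F i \<omega>) (range Inr)))"
    apply (rule indep_var_compose[OF iv])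
     apply (rule g1m)
    apply (rule g2m)
    done
  also have "g1 \<circ> (\<lambda>\<omega>. restrict (\<lambda>i. F i \<omega>) (range Inl)) = (\<lambda>\<omega>. real (Nc \<omega>))"
    by (auto simp: fun_eq_iff g1_def Nc_def poisson_count_def driving_family_def)
  also have "g2 \<circ> (\<lambda>\<omega>. restrict (\<lambda>i. F i \<omega>) (range Inr)) = V k"
    by (auto simp: fun_eq_iff g2_def V_def S_def driving_family_def)
  finally show ?thesis .
qed

lemma indep_VX: "indep_var borel (V k) borel (X k)"
proof -
  define A :: "(nat + nat + unit) set" where "A = insert (Inr (Inr ())) ((\<lambda>i. Inr (Inl i)) ` {..<k})"
  have iv: "indep_var (PiM A (\<lambda>_. borel)) (\<lambda>\<omega>. restrict (\<lambda>i. F i \<omega>) A)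
      (PiM {Inr (Inl k)} (\<lambda>_. borel)) (\<lambda>\<omega>. restrict (\<lambda>i. F i \<omega>) {Inr (Inl k)})"
    by (rule indep_var_restrict[OF indep]) (auto simp: A_def)
  define g2 where "g2 h = h (Inr (Inr ())) + (\<Sum>i<k. h (Inr (Inl i)))" for h :: "nat + nat + unit \<Rightarrow> real"
  define g3 where "g3 h = h (Inr (Inl k))" for h :: "nat + nat + unit \<Rightarrow> real"
  have g2m: "g2 \<in> borel_measurable (PiM A (\<lambda>_. borel))"
  proof -
    have [measurable]: "(\<lambda>h. h j) \<in> borel_measurable (PiM A (\<lambda>_. borel))" if "j \<in> A" for j
      using that by (rule measurable_component_singleton)
    show ?thesis unfolding g2_def by (measurable; auto simp: A_def)
  qed
  have g3m: "g3 \<in> borel_measurable (PiM {Inr (Inl k)} (\<lambda>_. borel))"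
    unfolding g3_def by (rule measurable_component_singleton) auto
  have "indep_var borel (g2 \<circ> (\<lambda>\<omega>. restrict (\<lambda>i. F i \<omega>) A)) borel (g3 \<circ> (\<lambda>\<omega>. restrict (\<lambda>i. F i \<omega>) {Inr (Inl k)}))"
    by (rule indep_var_compose[OF iv g2m g3m])
  also have "g2 \<circ> (\<lambda>\<omega>. restrict (\<lambda>i. F i \<omega>) A) = V k"
    by (auto simp: fun_eq_iff g2_def V_def S_def driving_family_def A_def)
  also have "g3 \<circ> (\<lambda>\<omega>. restrict (\<lambda>i. F i \<omega>) {Inr (Inl k)}) = X k"
    by (auto simp: fun_eq_iff g3_def driving_family_def)
  finally show ?thesis .
qed

lemma Ps_erlang:
  assumes "1 \<le> n"
  shows "distributed M lborel (Ps n) (erlang_density (n - 1) l)"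
proof -
  have "distributed M lborel (\<lambda>x. \<Sum>i\<in>Inl ` {..<n}. F i x) (erlang_density (card (Inl ` {..<n} :: (nat + nat + unit) set) - 1) l)"
  proof (rule exponential_distributed_sum)
    show "indep_vars (\<lambda>i. borel) F (Inl ` {..<n})" by (rule indep_vars_subset[OF indep]) auto
  qed (use assms l_pos T_exp in \<open>auto simp: driving_family_def lessThan_empty_iff\<close>)
  also have "(\<lambda>x. \<Sum>i\<in>Inl ` {..<n}. F i x) = Ps n"
    by (auto simp: fun_eq_iff sum.reindex Ps_def driving_family_def)
  also have "card (Inl ` {..<n} :: (nat + nat + unit) set) = n"
    by (simp add: card_image)
  finally show ?thesis .
qed

lemma prob_Ps_le1: "1 \<le> n \<Longrightarrow> prob {\<omega> \<in> space M. Ps n \<omega> \<le> 1} = erlang_CDF (n - 1) l 1"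
  using erlang_distributed_le[OF Ps_erlang, of n 1] l_pos by simp

end


context cpp begin

definition "\<pi> k = exp (- l) * l ^ k / fact k"

lemma pi_nonneg: "0 \<le> \<pi> k" using l_pos by (simp add: \<pi>_def)
lemma pi_pos: "0 < \<pi> k" using l_pos by (simp add: \<pi>_def)

lemma pi_sums: "\<pi> sums 1"
proof -
  have "(\<lambda>n. exp (- l) * (l ^ n /\<^sub>R fact n)) sums (exp (- l) * exp l)"
    by (intro sums_mult exp_converges)
  moreover have "(\<lambda>n. exp (- l) * (l ^ n /\<^sub>R fact n)) = \<pi>"
    by (simp add: fun_eq_iff \<pi>_def divide_inverse real_scaleR_def mult_ac)
  moreover have "exp (- l) * exp l = 1" by (simp add: exp_minus)
  ultimately show ?thesis by simp
qed

lemma T_pos_AE: "AE \<omega> in M. \<forall>i. 0 < T i \<omega>"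
proof (subst AE_all_countable, intro allI)
  fix i
  have "prob {\<omega> \<in> space M. T i \<omega> \<le> 0} = 0"
    using exponential_distributedD_le[OF T_exp[of i] _ l_pos, of 0] by simp
  moreover have "{\<omega> \<in> space M. T i \<omega> \<le> 0} \<in> events" by measurable
  ultimately have "AE \<omega> in M. \<not> T i \<omega> \<le> 0"
    using prob_Collect_eq_0[of "\<lambda>\<omega>. T i \<omega> \<le> 0"] by simp
  then show "AE \<omega> in M. 0 < T i \<omega>" by (auto simp: not_le)
qed

lemma Ps_mono: "(\<And>i. 0 \<le> T i \<omega>) \<Longrightarrow> n \<le> m \<Longrightarrow> Ps n \<omega> \<le> Ps m \<omega>"
  unfolding Ps_def by (intro sum_mono2) auto

lemma prob_Ps_le1': "1 \<le> n \<Longrightarrow> prob {\<omega> \<in> space M. Ps n \<omega> \<le> 1} = 1 - (\<Sum>j<n. \<pi> j)"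
proof -
  assume n: "1 \<le> n"
  then obtain m where m: "n = Suc m" by (cases n) auto
  show ?thesis using prob_Ps_le1[OF n]
    by (simp add: m erlang_CDF_def \<pi>_def lessThan_Suc_atMost[symmetric] mult.commute)
qed

lemma partial_pi: "(\<lambda>n. \<Sum>j<n. \<pi> j) \<longlonglongrightarrow> 1"
  using pi_sums by (simp add: sums_def)

lemma fin_AE: "AE \<omega> in M. finite {n. 1 \<le> n \<and> Ps n \<omega> \<le> 1}"
proof -
  have "prob {\<omega> \<in> space M. \<forall>n\<ge>1. Ps n \<omega> \<le> 1} = 0"
  proof (rule antisym)
    have "(\<lambda>n. 1 - (\<Sum>j<n. \<pi> j)) \<longlonglongrightarrow> 1 - 1" by (intro tendsto_intros partial_pi)
    moreover have "eventually (\<lambda>n. prob {\<omega> \<in> space M. \<forall>n\<ge>1. Ps n \<omega> \<le> 1} \<le> 1 - (\<Sum>j<n. \<pi> j)) sequentially"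
      using eventually_ge_at_top[of 1]
    proof eventually_elim
      case (elim n)
      have "prob {\<omega> \<in> space M. \<forall>n\<ge>1. Ps n \<omega> \<le> 1} \<le> prob {\<omega> \<in> space M. Ps n \<omega> \<le> 1}"
        using elim by (intro finite_measure_mono) auto
      then show ?case using prob_Ps_le1'[OF elim] by simp
    qed
    ultimately show "prob {\<omega> \<in> space M. \<forall>n\<ge>1. Ps n \<omega> \<le> 1} \<le> 0"
      using tendsto_lowerbound[of "\<lambda>n. 1 - (\<Sum>j<n. \<pi> j)" "1 - 1" sequentially "prob {\<omega> \<in> space M. \<forall>n\<ge>1. Ps n \<omega> \<le> 1}"]
      by simp
  qed simp
  moreover have "{\<omega> \<in> space M. \<forall>n\<ge>1. Ps n \<omega> \<le> 1} \<in> events" by measurable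
  ultimately have "AE \<omega> in M. \<not> (\<forall>n\<ge>1. Ps n \<omega> \<le> 1)"
    using prob_Collect_eq_0[of "\<lambda>\<omega>. \<forall>n\<ge>1. Ps n \<omega> \<le> 1"] by simp
  then show ?thesis using T_pos_AE
  proof eventually_elim
    case (elim \<omega>)
    show ?case
    proof (rule ccontr)
      assume inf: "infinite {n. 1 \<le> n \<and> Ps n \<omega> \<le> 1}"
      have "\<forall>n\<ge>1. Ps n \<omega> \<le> 1"
      proof safe
        fix n :: nat assume "1 \<le> n"
        obtain m where "m \<in> {n. 1 \<le> n \<and> Ps n \<omega> \<le> 1}" "n \<le> m"
          using inf by (metis finite_nat_set_iff_bounded_le nat_le_linear)
        then show "Ps n \<omega> \<le> 1" using Ps_mono[of \<omega> n m] elim(2) by (auto intro: less_imp_le order_trans)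
      qed
      then show False using elim(1) by simp
    qed
  qed
qed

lemma Nc_eq: "Nc \<omega> = card {n. 1 \<le> n \<and> Ps n \<omega> \<le> 1}"
  by (simp add: Nc_def pc_eq)

lemma Nc_ge_iff:
  assumes T: "\<And>i. 0 \<le> T i \<omega>" and fin: "finite {n. 1 \<le> n \<and> Ps n \<omega> \<le> 1}" and n: "1 \<le> n"
  shows "n \<le> Nc \<omega> \<longleftrightarrow> Ps n \<omega> \<le> 1"
proof
  assume le: "Ps n \<omega> \<le> 1"
  have "{1..n} \<subseteq> {n. 1 \<le> n \<and> Ps n \<omega> \<le> 1}"
    using Ps_mono[OF T] le by (auto intro: order_trans[OF _ le])
  then have "card {1..n} \<le> Nc \<omega>" unfolding Nc_eq using fin by (intro card_mono)
  then show "n \<le> Nc \<omega>" by simp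
next
  assume ge: "n \<le> Nc \<omega>"
  show "Ps n \<omega> \<le> 1"
  proof (rule ccontr)
    assume "\<not> Ps n \<omega> \<le> 1"
    then have "{n. 1 \<le> n \<and> Ps n \<omega> \<le> 1} \<subseteq> {1..<n}"
      using Ps_mono[OF T, of n] by (auto simp: not_le) (meson not_less order_trans)
    then have "Nc \<omega> \<le> card {1..<n}" unfolding Nc_eq by (intro card_mono) auto
    then show False using ge n by simp
  qed
qed

lemma Nc_ge_meas[measurable]: "{\<omega> \<in> space M. n \<le> Nc \<omega>} \<in> events"
  by measurable

lemma prob_Nc_ge: "prob {\<omega> \<in> space M. n \<le> Nc \<omega>} = 1 - (\<Sum>j<n. \<pi> j)"
proof (cases "n = 0")
  case True then show ?thesis by (simp add: prob_space)
next
  case False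
  then have n: "1 \<le> n" by simp
  have "prob {\<omega> \<in> space M. n \<le> Nc \<omega>} = prob {\<omega> \<in> space M. Ps n \<omega> \<le> 1}"
  proof (rule measure_eq_AE)
    show "AE x in M. (x \<in> {\<omega> \<in> space M. n \<le> Nc \<omega>}) = (x \<in> {\<omega> \<in> space M. Ps n \<omega> \<le> 1})"
      using T_pos_AE fin_AE
    proof eventually_elim
      case (elim x)
      then show ?case using Nc_ge_iff[of x n] n by (auto simp: less_imp_le)
    qed
  qed measurable
  then show ?thesis using prob_Ps_le1'[OF n] by simp
qed

lemma prob_Nc_eq: "prob {\<omega> \<in> space M. Nc \<omega> = n} = \<pi> n"
proof -
  have "{\<omega> \<in> space M. Nc \<omega> = n} = {\<omega> \<in> space M. n \<le> Nc \<omega>} - {\<omega> \<in> space M. Suc n \<le> Nc \<omega>}"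
    by auto
  then have "prob {\<omega> \<in> space M. Nc \<omega> = n} = prob {\<omega> \<in> space M. n \<le> Nc \<omega>} - prob {\<omega> \<in> space M. Suc n \<le> Nc \<omega>}"
    by (simp add: finite_measure_Diff subset_eq)
  then show ?thesis by (simp add: prob_Nc_ge)
qed

lemma prob_NV:
  assumes A: "A \<in> sets borel"
  shows "prob {\<omega> \<in> space M. real (Nc \<omega>) \<in> A \<and> u < V k \<omega>}
       = prob {\<omega> \<in> space M. real (Nc \<omega>) \<in> A} * prob {\<omega> \<in> space M. u < V k \<omega>}"
proof -
  have "prob ((\<lambda>x. (real (Nc x), V k x)) -` (A \<times> {u<..}) \<inter> space M) =
      prob ((\<lambda>\<omega>. real (Nc \<omega>)) -` A \<inter> space M) * prob (V k -` {u<..} \<inter> space M)"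
    by (rule indep_varD[OF indep_NV A]) simp
  moreover have "(\<lambda>x. (real (Nc x), V k x)) -` (A \<times> {u<..}) \<inter> space M = {\<omega> \<in> space M. real (Nc \<omega>) \<in> A \<and> u < V k \<omega>}" by auto
  moreover have "(\<lambda>\<omega>. real (Nc \<omega>)) -` A \<inter> space M = {\<omega> \<in> space M. real (Nc \<omega>) \<in> A}" by auto
  moreover have "V k -` {u<..} \<inter> space M = {\<omega> \<in> space M. u < V k \<omega>}" by auto
  ultimately show ?thesis by simp
qed

definition "av k u = prob {\<omega> \<in> space M. u < V k \<omega>}"

lemma prob_Nc_eq_V: "prob {\<omega> \<in> space M. Nc \<omega> = k \<and> u < V k \<omega>} = \<pi> k * av k u"
proof -
  have "prob {\<omega> \<in> space M. Nc \<omega> = k \<and> u < V k \<omega>} = prob {\<omega> \<in> space M. real (Nc \<omega>) \<in> {real k} \<and> u < V k \<omega>}" by simp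
  also have "\<dots> = prob {\<omega> \<in> space M. real (Nc \<omega>) \<in> {real k}} * av k u" unfolding av_def by (rule prob_NV) simp
  also have "prob {\<omega> \<in> space M. real (Nc \<omega>) \<in> {real k}} = \<pi> k" using prob_Nc_eq[of k] by simp
  finally show ?thesis .
qed

lemma prob_Nc_ge_V: "prob {\<omega> \<in> space M. k \<le> Nc \<omega> \<and> u < V k \<omega>} = (1 - (\<Sum>j<k. \<pi> j)) * av k u"
proof -
  have "prob {\<omega> \<in> space M. k \<le> Nc \<omega> \<and> u < V k \<omega>} = prob {\<omega> \<in> space M. real (Nc \<omega>) \<in> {real k..} \<and> u < V k \<omega>}" by simp
  also have "\<dots> = prob {\<omega> \<in> space M. real (Nc \<omega>) \<in> {real k..}} * av k u" unfolding av_def by (rule prob_NV) simp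
  also have "prob {\<omega> \<in> space M. real (Nc \<omega>) \<in> {real k..}} = 1 - (\<Sum>j<k. \<pi> j)" using prob_Nc_ge[of k] by simp
  finally show ?thesis .
qed

end


lemma conv_lower:
  fixes \<nu> E :: "real measure"
  assumes "prob_space \<nu>" "prob_space E" "sets \<nu> = sets borel" "sets E = sets borel"
  shows "measure E {\<alpha><..} * measure \<nu> {x - \<alpha><..} \<le> measure (\<nu> \<star> E) {x<..}"
proof -
  have "ennreal (measure E {\<alpha><..} * measure \<nu> {x - \<alpha><..}) =
     (\<integral>\<^sup>+v. ennreal (measure E {\<alpha><..}) * indicator {x - \<alpha><..} v \<partial>\<nu>)"
  proof -
    have "(\<integral>\<^sup>+v. ennreal (measure E {\<alpha><..}) * indicator {x - \<alpha><..} v \<partial>\<nu>)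
        = ennreal (measure E {\<alpha><..}) * emeasure \<nu> {x - \<alpha><..}"
      using assms(3) by (intro nn_integral_cmult_indicator) auto
    then show ?thesis using assms(1) by (simp add: finite_measure.emeasure_eq_measure[OF ps_fm] ennreal_mult)
  qed
  also have "\<dots> \<le> (\<integral>\<^sup>+v. ennreal (measure E {x - v<..}) \<partial>\<nu>)"
  proof (intro nn_integral_mono)
    fix v
    show "ennreal (measure E {\<alpha><..}) * indicator {x - \<alpha><..} v \<le> ennreal (measure E {x - v<..})"
    proof (cases "x - \<alpha> < v")
      case True
      then have "measure E {\<alpha><..} \<le> measure E {x - v<..}"
        using assms(2,4) by (intro finite_measure.finite_measure_mono[OF ps_fm]) auto
      then show ?thesis using True by (simp add: indicator_def)
    qed (simp add: indicator_def)
  qed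
  also have "\<dots> = emeasure (\<nu> \<star> E) {x<..}" by (rule conv_tail[OF assms, symmetric])
  also have "\<dots> = ennreal (measure (\<nu> \<star> E) {x<..})"
    using prob_space_conv[OF assms] by (simp add: finite_measure.emeasure_eq_measure[OF ps_fm])
  finally show ?thesis by (simp add: ennreal_le_iff)
qed

lemma light_tail_props:
  fixes D :: "real measure"
  assumes P: "prob_space D" and S: "sets D = sets borel" and L: "light_right_tail D"
  shows "\<exists>\<alpha>>0. measure D {\<alpha><..} > 0 \<and> (\<forall>\<eta>>0. \<exists>s0. \<forall>y\<ge>s0. measure D {y<..} \<le> \<eta> * measure (D \<star> D) {y<..})"
proof -
  interpret D: prob_space D by (rule P)
  from L[unfolded light_right_tail_def] show ?thesis
  proof (elim disjE conjE exE)
    assume pos: "\<forall>u>0. measure D {u<..} > 0"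
      and lim: "((\<lambda>u. measure D {u<..} / measure (D \<star> D) {u<..}) \<longlongrightarrow> 0) at_top"
    have "\<forall>\<eta>>0. \<exists>s0. \<forall>y\<ge>s0. measure D {y<..} \<le> \<eta> * measure (D \<star> D) {y<..}"
    proof safe
      fix \<eta> :: real assume eta: "\<eta> > 0"
      have "eventually (\<lambda>u. measure D {u<..} / measure (D \<star> D) {u<..} < \<eta>) at_top"
        using lim eta by (rule order_tendstoD)
      then obtain s1 where s1: "\<And>y. y \<ge> s1 \<Longrightarrow> measure D {y<..} / measure (D \<star> D) {y<..} < \<eta>"
        by (auto simp: eventually_at_top_linorder)
      have "\<forall>y\<ge>max s1 1. measure D {y<..} \<le> \<eta> * measure (D \<star> D) {y<..}"
      proof safe
        fix y assume y: "max s1 1 \<le> y"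
        have "measure D {1<..} \<le> measure D {0<..}" using S by (intro D.finite_measure_mono) auto
        then have "0 < measure D {0<..}" using pos[rule_format, of 1] by simp
        then have "0 < measure D {0<..} * measure D {y - 0<..}"
          using pos y by (intro mult_pos_pos) auto
        also have "\<dots> \<le> measure (D \<star> D) {y<..}" by (rule conv_lower[OF P P S S])
        finally have pp: "0 < measure (D \<star> D) {y<..}" .
        show "measure D {y<..} \<le> \<eta> * measure (D \<star> D) {y<..}"
          using s1[of y] y pp by (simp add: divide_less_eq less_imp_le)
      qed
      then show "\<exists>s0. \<forall>y\<ge>s0. measure D {y<..} \<le> \<eta> * measure (D \<star> D) {y<..}" by blast
    qed
    moreover have "measure D {1<..} > 0" using pos by simp
    ultimately show ?thesis by (intro exI[of _ 1]) auto
  next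
    fix A \<alpha> :: real
    assume A: "A > 0" and a: "\<alpha> > 0" and ae: "AE x in D. x \<le> A" and c: "measure D {\<alpha><..} > 0"
    have "\<forall>\<eta>>0. \<exists>s0. \<forall>y\<ge>s0. measure D {y<..} \<le> \<eta> * measure (D \<star> D) {y<..}"
    proof safe
      fix \<eta> :: real assume eta: "\<eta> > 0"
      have "\<forall>y\<ge>A. measure D {y<..} \<le> \<eta> * measure (D \<star> D) {y<..}"
      proof safe
        fix y assume y: "A \<le> y"
        have "AE x in D. x \<notin> {y<..}" using ae by eventually_elim (use y in auto)
        then have "measure D {y<..} = 0" using S by (subst D.prob_eq_0) auto
        then show "measure D {y<..} \<le> \<eta> * measure (D \<star> D) {y<..}" using eta by simp
      qed
      then show "\<exists>s0. \<forall>y\<ge>s0. measure D {y<..} \<le> \<eta> * measure (D \<star> D) {y<..}" by blast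
    qed
    then show ?thesis using a c by blast
  qed
qed


context cpp begin

definition "Dm = distr M borel (X 0)"
definition "\<mu> k = distr M borel (V k)"

lemma prob_\<mu>: "prob_space (\<mu> k)" unfolding \<mu>_def by (intro prob_space_distr) measurable
lemma sets_\<mu>: "sets (\<mu> k) = sets borel" by (simp add: \<mu>_def)
lemma prob_Dm: "prob_space Dm" unfolding Dm_def by (intro prob_space_distr) measurable
lemma sets_Dm: "sets Dm = sets borel" by (simp add: Dm_def)

lemma V_Suc: "V (Suc k) = (\<lambda>\<omega>. V k \<omega> + X k \<omega>)"
  by (simp add: fun_eq_iff V_def S_def)

lemma \<mu>_Suc: "\<mu> (Suc k) = (\<mu> k \<star> Dm)"
proof -
  have "distr M borel (\<lambda>\<omega>. V k \<omega> + X k \<omega>) = (distr M borel (V k) \<star> distr M borel (X k))"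
    by (rule sum_indep_random_variable[OF indep_VX]) measurable
  then show ?thesis unfolding \<mu>_def Dm_def V_Suc X_distr[of k] .
qed

lemma av_eq: "av k x = measure (\<mu> k) {x<..}"
  unfolding av_def \<mu>_def by (subst measure_distr) (auto intro!: arg_cong[where f=prob])

lemma \<mu>0: "\<mu> 0 = N01"
proof -
  have "V 0 = B" by (simp add: fun_eq_iff V_def S_def)
  then have "\<mu> 0 = distr M lborel B" unfolding \<mu>_def by (intro distr_cong) auto
  also have "\<dots> = N01" by (rule distributed_distr_eq_density[OF B_norm])
  finally show ?thesis .
qed

sublocale CS: conv_seq \<mu> Dm
  by (intro conv_seq.intro prob_\<mu> sets_\<mu> prob_Dm sets_Dm \<mu>_Suc)

lemma a_eq: "CS.a k x = av k x" by (simp add: CS.a_def av_eq)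

definition "Den u = prob {\<omega> \<in> space M. u < V (Nc \<omega>) \<omega>}"

lemma Den_sums: "(\<lambda>k. \<pi> k * av k u) sums Den u"
proof -
  define A where "A k = {\<omega> \<in> space M. Nc \<omega> = k \<and> u < V k \<omega>}" for k
  have "(\<lambda>k. prob (A k)) sums prob (\<Union>k. A k)"
  proof (rule finite_measure_UNION)
    show "range A \<subseteq> events" unfolding A_def by auto
    show "disjoint_family A" unfolding A_def disjoint_family_on_def by auto
  qed
  moreover have "(\<Union>k. A k) = {\<omega> \<in> space M. u < V (Nc \<omega>) \<omega>}" unfolding A_def by auto
  ultimately show ?thesis unfolding A_def Den_def prob_Nc_eq_V by simp
qed

lemma av_nonneg: "0 \<le> av k u" by (simp add: av_def)
lemma av_le1: "av k u \<le> 1" by (simp add: av_def)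

lemma Den_ge: "\<pi> k * av k u \<le> Den u"
proof -
  have "sum (\<lambda>k. \<pi> k * av k u) {k} \<le> (\<Sum>k. \<pi> k * av k u)"
    using Den_sums[of u] pi_nonneg av_nonneg by (intro sum_le_suminf) (auto simp: sums_iff)
  then show ?thesis using Den_sums[of u] by (simp add: sums_iff)
qed

lemma Den_pos: "0 < Den u"
proof -
  have "0 < \<pi> 0 * av 0 u" using pi_pos N01_pos[of u] by (simp add: av_eq \<mu>0)
  also have "\<dots> \<le> Den u" by (rule Den_ge)
  finally show ?thesis .
qed

lemma pi_Suc: "\<pi> (Suc n) = \<pi> n * (l / (real n + 1))"
  by (simp add: \<pi>_def field_simps)

lemma pi_shift: "\<pi> (i + j) \<le> \<pi> j * (l / (real j + 1)) ^ i"
proof (induction i)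
  case 0 then show ?case by simp
next
  case (Suc i)
  have "\<pi> (Suc i + j) = \<pi> (i + j) * (l / (real (i + j) + 1))" by (simp add: pi_Suc)
  also have "\<dots> \<le> \<pi> (i + j) * (l / (real j + 1))"
    using pi_nonneg l_pos by (intro mult_left_mono divide_left_mono) auto
  also have "\<dots> \<le> \<pi> j * (l / (real j + 1)) ^ i * (l / (real j + 1))"
    using Suc.IH l_pos by (intro mult_right_mono) auto
  finally show ?case by (simp add: mult_ac)
qed

lemma Q_eq: "1 - (\<Sum>i<j. \<pi> i) = (\<Sum>i. \<pi> (i + j))"
proof -
  have "summable \<pi>" using pi_sums by (simp add: sums_iff)
  from suminf_split_initial_segment[OF this, of j] pi_sums show ?thesis by (simp add: sums_iff)
qed

lemma Q_bound:
  assumes r: "l / (real j + 1) < 1"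
  shows "1 - (\<Sum>i<j. \<pi> i) \<le> \<pi> j / (1 - l / (real j + 1))"
proof -
  define r where "r = l / (real j + 1)"
  have r0: "0 \<le> r" using l_pos by (simp add: r_def)
  have r1: "r < 1" using r by (simp add: r_def)
  have sg: "summable (\<lambda>i. \<pi> j * r ^ i)" using r0 r1 by (intro summable_mult summable_geometric) auto
  have "summable \<pi>" using pi_sums by (simp add: sums_iff)
  then have s1: "summable (\<lambda>i. \<pi> (i + j))" by (rule summable_ignore_initial_segment)
  have "(\<Sum>i. \<pi> (i + j)) \<le> (\<Sum>i. \<pi> j * r ^ i)"
    using s1 sg pi_shift[of _ j] by (intro suminf_le) (auto simp: r_def)
  also have "\<dots> = \<pi> j * (\<Sum>i. r ^ i)" by (rule suminf_mult) (use r0 r1 in \<open>auto intro: summable_geometric\<close>)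
  also have "(\<Sum>i. r ^ i) = 1 / (1 - r)" using r0 r1 by (simp add: suminf_geometric)
  finally show ?thesis by (simp add: Q_eq r_def)
qed

lemma Q_le:
  assumes d: "\<delta> > 0"
  shows "\<exists>K. \<forall>j\<ge>K. 1 - (\<Sum>i<j. \<pi> i) \<le> (1 + \<delta>) * \<pi> j"
proof -
  obtain K :: nat where K: "l * (1 + \<delta>) / \<delta> \<le> real K" using real_arch_simple by blast
  have "1 - (\<Sum>i<j. \<pi> i) \<le> (1 + \<delta>) * \<pi> j" if j: "K \<le> j" for j
  proof -
    have "l * (1 + \<delta>) / \<delta> < real j + 1" using K j by linarith
    then have lt: "l * (1 + \<delta>) < \<delta> * (real j + 1)" using d by (simp add: divide_less_eq mult.commute)
    define r where "r = l / (real j + 1)"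
    have r_lt: "r * (1 + \<delta>) < \<delta>" using lt unfolding r_def by (simp add: field_simps)
    have "r * (1 + \<delta>) < 1 * (1 + \<delta>)" using r_lt by simp
    then have r1: "r < 1" using d by (simp add: mult_less_cancel_right)
    have "1 - (\<Sum>i<j. \<pi> i) \<le> \<pi> j / (1 - r)" using Q_bound r1 unfolding r_def by simp
    also have "\<dots> \<le> (1 + \<delta>) * \<pi> j"
    proof -
      have "1 \<le> (1 + \<delta>) * (1 - r)" using r_lt by (simp add: algebra_simps)
      then have "\<pi> j * 1 \<le> \<pi> j * ((1 + \<delta>) * (1 - r))" using pi_nonneg[of j]
        by (intro mult_left_mono) auto
      then have "\<pi> j \<le> (1 + \<delta>) * \<pi> j * (1 - r)" by (simp add: mult_ac)
      then show ?thesis using r1 by (simp add: divide_le_eq)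
    qed
    finally show ?thesis .
  qed
  then show ?thesis by blast
qed

end


context cpp begin

definition "Num u = prob {\<omega> \<in> space M. u < B \<omega> + (SUP t\<in>{0..1}. compound_poisson T X t \<omega>)}"

lemma Den_alt: "prob {\<omega> \<in> space M. u < B \<omega> + compound_poisson T X 1 \<omega>} = Den u"
  unfolding Den_def by (simp add: cp_eq Nc_def V_def)

lemma pc_le_Nc:
  assumes "finite {n. 1 \<le> n \<and> Ps n \<omega> \<le> 1}" "t \<le> 1"
  shows "poisson_count T t \<omega> \<le> Nc \<omega>"
  unfolding pc_eq Nc_eq using assms by (intro card_mono) auto

lemma bdd_cp:
  assumes "finite {n. 1 \<le> n \<and> Ps n \<omega> \<le> 1}"
  shows "bdd_above ((\<lambda>t. compound_poisson T X t \<omega>) ` {0..1})"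
proof -
  have 1: "(\<lambda>t. compound_poisson T X t \<omega>) ` {0..1} \<subseteq> (\<lambda>j. S j \<omega>) ` {..Nc \<omega>}"
    using pc_le_Nc[OF assms] by (auto simp: cp_eq)
  have 2: "bdd_above ((\<lambda>j. S j \<omega>) ` {..Nc \<omega>})" by (intro bdd_above_finite) auto
  show ?thesis by (rule bdd_above_mono[OF 2 1])
qed

lemma Num_meas: "{\<omega> \<in> space M. u < B \<omega> + (SUP t\<in>{0..1}. compound_poisson T X t \<omega>)} \<in> events"
  by measurable

lemma Den_le_Num: "Den u \<le> Num u"
proof -
  have "prob {\<omega> \<in> space M. u < B \<omega> + compound_poisson T X 1 \<omega>} \<le> Num u"
    unfolding Num_def
  proof (rule finite_measure_mono_AE[OF _ Num_meas])
    show "AE x in M. x \<in> {\<omega> \<in> space M. u < B \<omega> + compound_poisson T X 1 \<omega>} \<longrightarrow>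
        x \<in> {\<omega> \<in> space M. u < B \<omega> + (SUP t\<in>{0..1}. compound_poisson T X t \<omega>)}"
      using fin_AE
    proof eventually_elim
      case (elim \<omega>)
      have "compound_poisson T X 1 \<omega> \<le> (SUP t\<in>{0..1}. compound_poisson T X t \<omega>)"
        by (rule cSUP_upper[OF _ bdd_cp[OF elim]]) auto
      then show ?case by auto
    qed
  qed
  then show ?thesis by (simp add: Den_alt)
qed

definition "E u j = {\<omega> \<in> space M. j \<le> Nc \<omega> \<and> u < V j \<omega>}"

lemma E_meas[measurable]: "E u j \<in> events" unfolding E_def by measurable

lemma Num_le_union: "Num u \<le> prob (\<Union>j. E u j)"
  unfolding Num_def
proof (rule finite_measure_mono_AE)
  show "AE x in M. x \<in> {\<omega> \<in> space M. u < B \<omega> + (SUP t\<in>{0..1}. compound_poisson T X t \<omega>)} \<longrightarrow> x \<in> (\<Union>j. E u j)"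
    using fin_AE
  proof eventually_elim
    case (elim \<omega>)
    show ?case
    proof
      assume w: "\<omega> \<in> {\<omega> \<in> space M. u < B \<omega> + (SUP t\<in>{0..1}. compound_poisson T X t \<omega>)}"
      then have "u - B \<omega> < (SUP t\<in>{0..1}. compound_poisson T X t \<omega>)" by auto
      then obtain t where t: "t \<in> {0..1}" "u - B \<omega> < compound_poisson T X t \<omega>"
        using less_cSUP_iff[OF _ bdd_cp[OF elim]] by auto
      define j where "j = poisson_count T t \<omega>"
      have "j \<le> Nc \<omega>" unfolding j_def using pc_le_Nc[OF elim] t by auto
      moreover have "u < V j \<omega>" using t unfolding j_def V_def cp_eq by auto
      ultimately show "\<omega> \<in> (\<Union>j. E u j)" using w unfolding E_def by auto
    qed
  qed
qed measurable

lemma prob_E: "prob (E u j) = (1 - (\<Sum>i<j. \<pi> i)) * av j u"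
  unfolding E_def by (rule prob_Nc_ge_V)

lemma Num_upper:
  assumes d: "\<delta> > 0"
  shows "\<exists>K. \<forall>u. Num u \<le> (\<Sum>k<K. av k u) + (1 + \<delta>) * Den u"
proof -
  obtain K where K: "\<And>j. K \<le> j \<Longrightarrow> 1 - (\<Sum>i<j. \<pi> i) \<le> (1 + \<delta>) * \<pi> j" using Q_le[OF d] by blast
  have "Num u \<le> (\<Sum>k<K. av k u) + (1 + \<delta>) * Den u" for u
  proof -
    have PE: "prob (E u (j + K)) \<le> (1 + \<delta>) * (\<pi> (j + K) * av (j + K) u)" for j
    proof -
      have "(1 - (\<Sum>i<j + K. \<pi> i)) * av (j + K) u \<le> ((1 + \<delta>) * \<pi> (j + K)) * av (j + K) u"
        by (rule mult_right_mono[OF K av_nonneg]) simp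
      then show ?thesis unfolding prob_E by (simp add: mult.assoc)
    qed
    have sD: "summable (\<lambda>k. \<pi> k * av k u)" using Den_sums[of u] by (simp add: sums_iff)
    then have sD': "summable (\<lambda>j. \<pi> (j + K) * av (j + K) u)" by (rule summable_ignore_initial_segment)
    have sE: "summable (\<lambda>j. prob (E u (j + K)))"
      by (rule summable_comparison_test'[where g="\<lambda>j. (1 + \<delta>) * (\<pi> (j + K) * av (j + K) u)"])
         (use PE sD' in \<open>auto intro: summable_mult\<close>)
    have "(\<Union>j. E u j) \<subseteq> (\<Union>j\<in>{..<K}. E u j) \<union> (\<Union>j. E u (j + K))"
    proof
      fix x assume "x \<in> (\<Union>j. E u j)"
      then obtain j where "x \<in> E u j" by auto
      then show "x \<in> (\<Union>j\<in>{..<K}. E u j) \<union> (\<Union>j. E u (j + K))"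
        by (cases "j < K") (auto intro!: exI[of _ "j - K"] simp: not_less)
    qed
    then have "prob (\<Union>j. E u j) \<le> prob ((\<Union>j\<in>{..<K}. E u j) \<union> (\<Union>j. E u (j + K)))"
      by (intro finite_measure_mono) auto
    also have "\<dots> \<le> prob (\<Union>j\<in>{..<K}. E u j) + prob (\<Union>j. E u (j + K))"
      by (intro measure_Un_le) auto
    also have "prob (\<Union>j\<in>{..<K}. E u j) \<le> (\<Sum>j<K. prob (E u j))"
      by (intro finite_measure_subadditive_finite) auto
    also have "(\<Sum>j<K. prob (E u j)) \<le> (\<Sum>j<K. av j u)"
    proof (intro sum_mono)
      fix j show "prob (E u j) \<le> av j u"
        unfolding av_def E_def by (intro finite_measure_mono) auto
    qed
    also have "prob (\<Union>j. E u (j + K)) \<le> (\<Sum>j. prob (E u (j + K)))"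
      using sE by (intro finite_measure_subadditive_countably) auto
    also have "\<dots> \<le> (\<Sum>j. (1 + \<delta>) * (\<pi> (j + K) * av (j + K) u))"
      using PE sE sD' by (intro suminf_le) (auto intro: summable_mult)
    also have "\<dots> = (1 + \<delta>) * (\<Sum>j. \<pi> (j + K) * av (j + K) u)"
      using sD' by (rule suminf_mult)
    also have "(\<Sum>j. \<pi> (j + K) * av (j + K) u) \<le> Den u"
    proof -
      have "(\<Sum>k. \<pi> k * av k u) = (\<Sum>j. \<pi> (j + K) * av (j + K) u) + (\<Sum>k<K. \<pi> k * av k u)"
        by (rule suminf_split_initial_segment[OF sD])
      moreover have "0 \<le> (\<Sum>k<K. \<pi> k * av k u)" using pi_nonneg av_nonneg by (intro sum_nonneg) auto
      ultimately show ?thesis using Den_sums[of u] by (simp add: sums_iff)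
    qed
    finally show ?thesis using Num_le_union[of u] d by (auto intro: order_trans simp: mult_left_mono)
  qed
  then show ?thesis by blast
qed

end


theorem corollary1:
  fixes M :: "'a measure" and l :: real
    and T :: "nat \<Rightarrow> 'a \<Rightarrow> real" and X :: "nat \<Rightarrow> 'a \<Rightarrow> real" and B :: "'a \<Rightarrow> real"
  assumes "prob_space M"
    and "l > 0"
    and "\<And>n. distributed M lborel (T n) (exponential_density l)"
    and "\<And>k. X k \<in> borel_measurable M"
    and "\<And>k. distr M borel (X k) = distr M borel (X 0)"
    and "distributed M lborel B std_normal_density"
    and "prob_space.indep_vars M (\<lambda>_. borel) (driving_family T X B) UNIV"
    and "light_right_tail (distr M borel (X 0))"
  shows "((\<lambda>u. measure M {\<omega> \<in> space M. B \<omega> + (SUP t\<in>{0..1}. compound_poisson T X t \<omega>) > u}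
              / measure M {\<omega> \<in> space M. B \<omega> + compound_poisson T X 1 \<omega> > u})
          \<longlongrightarrow> 1) at_top"
proof -
  interpret cpp M l T X B
    using assms by (intro cpp.intro cpp_axioms.intro) auto
  have lt: "light_right_tail Dm" using assms(8) by (simp add: Dm_def)
  obtain \<alpha> where \<alpha>: "\<alpha> > 0" "measure Dm {\<alpha><..} > 0"
    and tail: "\<forall>\<eta>>0. \<exists>s0. \<forall>y\<ge>s0. measure Dm {y<..} \<le> \<eta> * measure (Dm \<star> Dm) {y<..}"
    using light_tail_props[OF prob_Dm sets_Dm lt] by blast
  have a0: "CS.a 0 x = measure N01 {x<..}" for x by (simp add: CS.a_def \<mu>0)
  interpret L: conv_seq_L \<mu> Dm \<pi> Den \<alpha>
  proof (intro conv_seq_L.intro conv_seq_L_axioms.intro)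
    show "conv_seq \<mu> Dm" by (rule CS.conv_seq_axioms)
    show "\<And>k. 0 < \<pi> k" by (rule pi_pos)
    show "\<And>k u. \<pi> k * CS.a k u \<le> Den u" by (simp add: a_eq Den_ge)
    show "0 < \<alpha>" by (rule \<alpha>(1))
    show "0 < measure Dm {\<alpha><..}" by (rule \<alpha>(2))
    show "\<And>\<eta>. 0 < \<eta> \<Longrightarrow> \<exists>s0. \<forall>y\<ge>s0. measure Dm {y<..} \<le> \<eta> * measure (Dm \<star> Dm) {y<..}"
      using tail by blast
    show "\<And>s. ((\<lambda>u. CS.a 0 (u - s) / CS.a 0 (u - s - 1)) \<longlongrightarrow> 0) at_top"
      unfolding a0 by (rule N01_ratio)
    show "\<And>x. 0 < CS.a 0 x" unfolding a0 by (rule N01_pos)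
  qed
  have small: "eventually (\<lambda>u. av k u \<le> \<epsilon> * Den u) at_top" if "\<epsilon> > 0" for k \<epsilon>
    using L.L[OF that, of k 0] by (simp add: a_eq)
  have "((\<lambda>u. Num u / Den u) \<longlongrightarrow> 1) at_top"
    by (rule final_comb[OF Den_pos Den_le_Num small Num_upper])
  moreover have "(\<lambda>u. measure M {\<omega> \<in> space M. B \<omega> + (SUP t\<in>{0..1}. compound_poisson T X t \<omega>) > u}
              / measure M {\<omega> \<in> space M. B \<omega> + compound_poisson T X 1 \<omega> > u}) = (\<lambda>u. Num u / Den u)"
    by (simp add: fun_eq_iff Num_def Den_alt[symmetric])
  ultimately show ?thesis by simp
qed


end
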